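(* Let $C>1$ be a constant such that for every real $Z>0$ and every cubic field $K$ with $|\Delta(K)|\le Z$, the set $S_K(CZ^{1/4})$ is nonempty. Let $X,Y>0$ be real numbers with $Y\geq CX^{1/4}$, and let $K$ be a cubic field with $X/2\leq|\Delta(K)|\leq X$. Then \[ \#S_K(Y)/\#S_K(CX^{1/4})\ll Y^2/X^{1/2}, \] where the implied constant is independent of $X$, $Y$, and $K$.
   Context: For a cubic field $K$ with ring of integers $\mathcal{O}_K$ and discriminant $\Delta(K)$, an element $\alpha\in\mathcal{O}_K$ is reduced if its trace lies in $\{-1,0,1\}$; $|\alpha|_\infty=\max_{v\mid\infty}|\alpha|_v$ (maximum of $|\tau(\alpha)|$ over complex embeddings $\tau$); for $Y>0$, $S_K(Y)$ is the set of reduced $\alpha\in\mathcal{O}_K\setminus\mathbb{Z}$ with $|\alpha|_\infty<Y$. *)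

theory Defs
  imports "HOL-Analysis.Analysis" "HOL-Computational_Algebra.Computational_Algebra"
begin

text \<open>Cubic fields are represented concretely as subfields of the complex numbers
  (every cubic field embeds in the complex numbers):
  K = Q(theta) where theta is a root of an irreducible cubic over Q.\<close>

definition cubic_field :: "complex set \<Rightarrow> bool" where
  "cubic_field K \<longleftrightarrow> (\<exists>(f::rat poly) \<theta>. degree f = 3 \<and> irreducible f \<and>
       poly (map_poly of_rat f) \<theta> = 0 \<and>
       K = {poly (map_poly of_rat q) \<theta> | q. True})"

definition embeddings :: "complex set \<Rightarrow> (complex \<Rightarrow> complex) set" where
  "embeddings K = {\<sigma>. \<sigma> 1 = 1 \<and>
      (\<forall>x\<in>K. \<forall>y\<in>K. \<sigma> (x + y) = \<sigma> x + \<sigma> y \<and> \<sigma> (x * y) = \<sigma> x * \<sigma> y) \<and>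
      (\<forall>x. x \<notin> K \<longrightarrow> \<sigma> x = 0)}"

definition trace :: "complex set \<Rightarrow> complex \<Rightarrow> complex" where
  "trace K \<alpha> = (\<Sum>\<sigma>\<in>embeddings K. \<sigma> \<alpha>)"

definition abs_inf :: "complex set \<Rightarrow> complex \<Rightarrow> real" where
  "abs_inf K \<alpha> = Max ((\<lambda>\<sigma>. cmod (\<sigma> \<alpha>)) ` embeddings K)"

definition algebraic_int :: "complex \<Rightarrow> bool" where
  "algebraic_int x \<longleftrightarrow> (\<exists>p::int poly. lead_coeff p = 1 \<and> poly (map_poly of_int p) x = 0)"

definition ring_of_integers :: "complex set \<Rightarrow> complex set" where
  "ring_of_integers K = {\<alpha>\<in>K. algebraic_int \<alpha>}"

definition integral_basis :: "complex set \<Rightarrow> (nat \<Rightarrow> complex) \<Rightarrow> bool" where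
  "integral_basis K \<omega> \<longleftrightarrow> (\<forall>i<3. \<omega> i \<in> ring_of_integers K) \<and>
     (\<forall>\<alpha>\<in>ring_of_integers K. \<exists>!n::nat \<Rightarrow> int. (\<forall>i\<ge>3. n i = 0) \<and>
         \<alpha> = (\<Sum>i<3. of_int (n i) * \<omega> i))"

definition det3 :: "(nat \<Rightarrow> nat \<Rightarrow> complex) \<Rightarrow> complex" where
  "det3 M = M 0 0 * (M 1 1 * M 2 2 - M 1 2 * M 2 1)
          - M 0 1 * (M 1 0 * M 2 2 - M 1 2 * M 2 0)
          + M 0 2 * (M 1 0 * M 2 1 - M 1 1 * M 2 0)"

text \<open>Discriminant: det(Tr(omega_i omega_j)) for an integral basis (independent of the basis).\<close>
definition disc :: "complex set \<Rightarrow> complex" where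
  "disc K = (let \<omega> = (SOME \<omega>. integral_basis K \<omega>) in
              det3 (\<lambda>i j. trace K (\<omega> i * \<omega> j)))"

definition S :: "complex set \<Rightarrow> real \<Rightarrow> complex set" where
  "S K Y = {\<alpha>\<in>ring_of_integers K. trace K \<alpha> \<in> {-1, 0, 1} \<and> \<alpha> \<notin> \<int> \<and> abs_inf K \<alpha> < Y}"

end

theory Submission
  imports Defs "Jordan_Normal_Form.Char_Poly"
begin

lemma alg_int_lib: "algebraic_int x \<longleftrightarrow> Polynomial.algebraic_int x"
  unfolding algebraic_int_def algebraic_int_altdef_ipoly by auto

lemma monic_rel:
  fixes p :: "int poly" and x :: complex
  assumes "lead_coeff p = 1" "poly (of_int_poly p) x = 0"
  shows "x ^ degree p = (\<Sum>l<degree p. of_int (- coeff p l) * x^l)"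
proof -
  have d: "degree (of_int_poly p :: complex poly) = degree p" by simp
  have "0 = (\<Sum>i\<le>degree p. of_int (coeff p i) * x ^ i)"
    using assms(2) unfolding poly_altdef d by simp
  also have "\<dots> = (\<Sum>i<degree p. of_int (coeff p i) * x ^ i) + x ^ degree p"
    using assms(1) by (simp add: lessThan_Suc_atMost[symmetric])
  finally show ?thesis by (simp add: sum_negf eq_neg_iff_add_eq_0 add.commute)
qed

lemma monic_deg_pos:
  fixes p :: "int poly" and x :: complex
  assumes "lead_coeff p = 1" "poly (of_int_poly p) x = 0"
  shows "degree p > 0"
proof (rule ccontr)
  assume "\<not> degree p > 0"
  then have "degree p = 0" by simp
  have d: "degree (of_int_poly p :: complex poly) = degree p" by simp
  have "0 = (\<Sum>i\<le>degree p. of_int (coeff p i) * x ^ i)"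
    using assms(2) unfolding poly_altdef d by simp
  then show False using assms(1) \<open>degree p = 0\<close> by simp
qed

lemma alg_int_add:
  fixes x y :: complex
  assumes "algebraic_int x" "algebraic_int y"
  shows "algebraic_int (x + y)"
proof -
  obtain p where p: "lead_coeff p = 1" "poly (of_int_poly p) x = 0"
    using assms(1) unfolding algebraic_int_def by auto
  obtain q where q: "lead_coeff q = 1" "poly (of_int_poly q) y = 0"
    using assms(2) unfolding algebraic_int_def by auto
  define m where "m = degree p"
  define n where "n = degree q"
  have m0: "m > 0" unfolding m_def using monic_deg_pos[OF p] .
  have n0: "n > 0" unfolding n_def using monic_deg_pos[OF q] .
  have xm: "x^m = (\<Sum>l<m. of_int (- coeff p l) * x^l)" unfolding m_def using monic_rel[OF p] .
  have yn: "y^n = (\<Sum>l<n. of_int (- coeff q l) * y^l)" unfolding n_def using monic_rel[OF q] .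
  define N where "N = m * n"
  have N0: "N > 0" using m0 n0 unfolding N_def by simp
  define g where "g s = x^(s div n) * y^(s mod n)" for s
  define Mo where "Mo = {z. \<exists>c::nat\<Rightarrow>int. z = (\<Sum>s<N. of_int (c s) * g s)}"
  have Mo_add: "a + b \<in> Mo" if ha: "a \<in> Mo" and hb: "b \<in> Mo" for a b
  proof -
    obtain ca where ca: "a = (\<Sum>s<N. of_int (ca s) * g s)" using ha unfolding Mo_def by blast
    obtain cb where cb: "b = (\<Sum>s<N. of_int (cb s) * g s)" using hb unfolding Mo_def by blast
    have "a + b = (\<Sum>s<N. of_int ((\<lambda>s. ca s + cb s) s) * g s)"
      unfolding ca cb by (simp add: sum.distrib[symmetric] algebra_simps)
    then show ?thesis unfolding Mo_def by (auto intro!: exI[of _ "\<lambda>s. ca s + cb s"])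
  qed
  have Mo_smult: "of_int k * a \<in> Mo" if ha: "a \<in> Mo" for a k
  proof -
    obtain ca where ca: "a = (\<Sum>s<N. of_int (ca s) * g s)" using ha unfolding Mo_def by blast
    have "of_int k * a = (\<Sum>s<N. of_int ((\<lambda>s. k * ca s) s) * g s)"
      unfolding ca by (simp add: sum_distrib_left algebra_simps)
    then show ?thesis unfolding Mo_def by (auto intro!: exI[of _ "\<lambda>s. k * ca s"])
  qed
  have Mo_0: "0 \<in> Mo" unfolding Mo_def by (rule CollectI, rule exI[of _ "\<lambda>_. 0"]) simp
  have Mo_g: "g s \<in> Mo" if "s < N" for s
  proof -
    have "g s = (\<Sum>t<N. of_int ((\<lambda>t. if t = s then 1 else 0) t) * g t)"
    proof -
      have "(\<Sum>t<N. of_int ((\<lambda>t. if t = s then 1 else 0) t) * g t) = (\<Sum>t<N. if t = s then g t else 0)"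
        by (intro sum.cong) auto
      then show ?thesis using that by simp
    qed
    then show ?thesis unfolding Mo_def by (auto intro!: exI[of _ "\<lambda>t. if t = s then 1 else 0"])
  qed
  have Mo_sum: "finite A \<Longrightarrow> (\<forall>i\<in>A. h i \<in> Mo) \<Longrightarrow> sum h A \<in> Mo" for A and h :: "nat \<Rightarrow> complex"
    by (induction A rule: finite_induct) (auto intro: Mo_0 Mo_add)
  have xg: "x * g s \<in> Mo" if s: "s < N" for s
  proof (cases "s div n + 1 < m")
    case True
    have e1: "(s + n) div n = s div n + 1" "(s + n) mod n = s mod n" using n0 by auto
    have e: "s div n * n + s mod n = s" by simp
    have "s mod n < n" using n0 by simp
    then have "s + n < s div n * n + 2 * n" using e by linarith
    then have "s + n < (s div n + 2) * n" by (simp add: algebra_simps)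
    also have "\<dots> \<le> m * n" using True by (intro mult_right_mono) auto
    finally have lt: "s + n < N" unfolding N_def .
    have "x * g s = g (s + n)" unfolding g_def e1 by simp
    then show ?thesis using Mo_g[OF lt] by simp
  next
    case False
    have "s div n < m" using s unfolding N_def by (simp add: div_less_iff_less_mult n0)
    then have sm: "s div n + 1 = m" using False by simp
    have "x * g s = x^m * y^(s mod n)" unfolding g_def sm[symmetric] by simp
    also have "\<dots> = (\<Sum>l<m. of_int (- coeff p l) * x^l) * y^(s mod n)" by (simp only: xm)
    also have "\<dots> = (\<Sum>l<m. of_int (- coeff p l) * (x^l * y^(s mod n)))"
      by (simp add: sum_distrib_right mult.assoc)
    also have "\<dots> = (\<Sum>l<m. of_int (- coeff p l) * g (l * n + s mod n))"
      by (intro sum.cong) (simp_all add: g_def n0)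
    also have "\<dots> \<in> Mo"
    proof (intro Mo_sum ballI Mo_smult Mo_g)
      fix l assume "l \<in> {..<m}"
      then have "l + 1 \<le> m" by simp
      then have "(l + 1) * n \<le> m * n" by (rule mult_right_mono) simp
      moreover have "s mod n < n" using n0 by simp
      ultimately show "l * n + s mod n < N" unfolding N_def by (simp add: algebra_simps)
    qed simp
    finally show ?thesis .
  qed
  have yg: "y * g s \<in> Mo" if s: "s < N" for s
  proof (cases "s mod n + 1 < n")
    case True
    have e1: "(s + 1) div n = s div n" "(s + 1) mod n = s mod n + 1" using True n0
      by (auto simp: div_Suc mod_Suc)
    have lt: "s + 1 < N"
    proof -
      have e: "s div n * n + s mod n = s" by simp
      have dm: "s div n < m" using s unfolding N_def by (simp add: div_less_iff_less_mult n0)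
      have "s + 1 < s div n * n + n" using e True by linarith
      also have "s div n * n + n = (s div n + 1) * n" by (simp add: algebra_simps)
      also have "\<dots> \<le> m * n" using dm by (intro mult_right_mono) auto
      finally show ?thesis unfolding N_def .
    qed
    have "y * g s = g (s + 1)" unfolding g_def e1 by simp
    then show ?thesis using Mo_g[OF lt] by simp
  next
    case False
    have sn: "s mod n + 1 = n" using False n0 by (metis Suc_eq_plus1 Suc_lessI mod_less_divisor)
    have dm: "s div n < m" using s unfolding N_def by (simp add: div_less_iff_less_mult n0)
    have "y * g s = x^(s div n) * y^(s mod n + 1)" unfolding g_def by simp
    also have "\<dots> = x^(s div n) * y^n" using sn by simp
    also have "\<dots> = x^(s div n) * (\<Sum>l<n. of_int (- coeff q l) * y^l)" by (simp only: yn)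
    also have "\<dots> = (\<Sum>l<n. of_int (- coeff q l) * (x^(s div n) * y^l))"
      by (simp add: sum_distrib_left algebra_simps)
    also have "\<dots> = (\<Sum>l<n. of_int (- coeff q l) * g ((s div n) * n + l))"
      by (intro sum.cong) (simp_all add: g_def n0)
    also have "\<dots> \<in> Mo"
    proof (intro Mo_sum ballI Mo_smult Mo_g)
      fix l assume "l \<in> {..<n}"
      then have "l < n" by simp
      moreover have "(s div n + 1) * n \<le> m * n" using dm by (intro mult_right_mono) auto
      ultimately show "(s div n) * n + l < N" unfolding N_def by (simp add: algebra_simps)
    qed simp
    finally show ?thesis .
  qed
  have "\<forall>s\<in>{..<N}. \<exists>c. (x + y) * g s = (\<Sum>t<N. of_int (c t) * g t)"
  proof
    fix s assume "s \<in> {..<N}"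
    then have "(x + y) * g s \<in> Mo" using xg yg Mo_add by (simp add: distrib_right)
    then show "\<exists>c. (x + y) * g s = (\<Sum>t<N. of_int (c t) * g t)" unfolding Mo_def by simp
  qed
  then obtain cf where cf: "\<forall>s\<in>{..<N}. (x + y) * g s = (\<Sum>t<N. of_int (cf s t) * g t)"
    by (metis bchoice)
  define A :: "int mat" where "A = mat N N (\<lambda>(s,t). cf s t)"
  define v :: "complex vec" where "v = vec N g"
  have A: "A \<in> carrier_mat N N" unfolding A_def by simp
  have Ac: "of_int_hom.mat_hom A \<in> carrier_mat N N" using A by simp
  have ev: "of_int_hom.mat_hom A *\<^sub>v v = (x + y) \<cdot>\<^sub>v v"
  proof (rule eq_vecI)
    fix s assume "s < dim_vec ((x + y) \<cdot>\<^sub>v v)"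
    then have s: "s < N" unfolding v_def by simp
    have "(of_int_hom.mat_hom A *\<^sub>v v) $ s = (\<Sum>t<N. of_int (cf s t) * g t)"
      using s unfolding A_def v_def by (simp add: mult_mat_vec_def scalar_prod_def atLeast0LessThan)
    also have "\<dots> = (x + y) * g s" using cf s by simp
    finally show "(of_int_hom.mat_hom A *\<^sub>v v) $ s = ((x + y) \<cdot>\<^sub>v v) $ s" using s unfolding v_def by simp
  qed (simp add: A_def v_def)
  have v0: "v \<noteq> 0\<^sub>v N"
  proof
    assume "v = 0\<^sub>v N"
    then have "v $ 0 = 0" using N0 by simp
    moreover have "v $ 0 = 1" using N0 unfolding v_def g_def by simp
    ultimately show False by simp
  qed
  have "eigenvector (of_int_hom.mat_hom A) v (x + y)"
    unfolding eigenvector_def using ev v0 Ac unfolding v_def by auto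
  then have "eigenvalue (of_int_hom.mat_hom A) (x + y)" unfolding eigenvalue_def by blast
  then have "poly (char_poly (of_int_hom.mat_hom A)) (x + y) = 0"
    using eigenvalue_root_char_poly[OF Ac, of "x + y"] by blast
  then have r: "poly (of_int_poly (char_poly A)) (x + y) = 0"
    using of_int_hom.char_poly_hom[OF A] by metis
  have "lead_coeff (char_poly A) = 1" using degree_monic_char_poly[OF A] by simp
  then show ?thesis unfolding algebraic_int_def using r by blast
qed

lemma alg_int_diff:
  fixes x y :: complex
  assumes "algebraic_int x" "algebraic_int y"
  shows "algebraic_int (x - y)"
proof -
  have "algebraic_int (-y)" using assms(2) unfolding alg_int_lib by simp
  from alg_int_add[OF assms(1) this] show ?thesis by simp
qed

lemma packing:
  fixes G :: "complex \<Rightarrow> real" and Q :: "complex set"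
  assumes cont: "continuous_on UNIV G"
   and tri: "\<And>z w. G (z + w) \<le> G z + G w"
   and hom: "\<And>r z. G (r *\<^sub>R z) = \<bar>r\<bar> * G z"
   and fin: "finite Q" and T: "T > 0"
   and bnd: "\<And>q. q \<in> Q \<Longrightarrow> G q < R"
   and sep: "\<And>q q'. q \<in> Q \<Longrightarrow> q' \<in> Q \<Longrightarrow> q \<noteq> q' \<Longrightarrow> T \<le> G (q - q')"
  shows "real (card Q) * T^2 \<le> 4 * (R + T)^2"
proof (cases "Q = {}")
  case True then show ?thesis by simp
next
  case False
  have G0: "G 0 = 0" using hom[of 0 0] by simp
  have Gneg: "G (- z) = G z" for z using hom[of "-1" z] by simp
  have Gnn: "G z \<ge> 0" for z using tri[of z "-z"] G0 Gneg[of z] by simp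
  have R0: "R > 0" using False bnd Gnn by (meson ex_in_conv le_less_trans)
  define B where "B = Max (norm ` Q) + 1"
  have Bq: "norm q < B" if "q \<in> Q" for q
  proof -
    have "norm q \<le> Max (norm ` Q)" using fin that by (intro Max_ge) auto
    then show ?thesis unfolding B_def by linarith
  qed
  have B0: "B > 0" using Bq False norm_ge_zero by (meson ex_in_conv le_less_trans)
  define e where "e = T / (2 * B)"
  have e0: "e > 0" unfolding e_def using T B0 by simp
  define H where "H z = G z + e * norm z" for z
  have Htri: "H (z + w) \<le> H z + H w" for z w
  proof -
    have "e * norm (z + w) \<le> e * (norm z + norm w)"
      using norm_triangle_ineq[of z w] e0 by (intro mult_left_mono) auto
    then show ?thesis unfolding H_def using tri[of z w] by (simp add: distrib_left)
  qed
  have Hhom: "H (r *\<^sub>R z) = \<bar>r\<bar> * H z" for r z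
    unfolding H_def hom by (simp add: algebra_simps)
  have Hneg: "H (- z) = H z" for z using Hhom[of "-1" z] by simp
  have Hge: "H z \<ge> e * norm z" for z unfolding H_def using Gnn[of z] by simp
  have Hcont: "continuous_on UNIV H" unfolding H_def
    by (intro continuous_intros cont)
  define U where "U = {z. H z < 1}"
  have Uopen: "open U" unfolding U_def
    by (rule open_Collect_less[OF Hcont]) (simp add: continuous_on_const)
  have Ubnd: "bounded U"
  proof -
    have "U \<subseteq> cball 0 (1 / e)"
    proof
      fix z assume "z \<in> U"
      then have "e * norm z < 1" using Hge[of z] unfolding U_def by simp
      then show "z \<in> cball 0 (1 / e)" using e0 by (simp add: field_simps)
    qed
    then show ?thesis using bounded_cball bounded_subset by blast
  qed
  have U0: "0 \<in> U" using G0 by (simp add: U_def H_def)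
  obtain d where d: "d > 0" "ball 0 d \<subseteq> U" using Uopen U0 open_contains_ball by blast
  have Uborel: "U \<in> sets borel" using Uopen by simp
  have mu_pos: "emeasure lborel U > 0"
  proof -
    have "emeasure lborel (ball (0::complex) d) > 0"
      using d(1) by (simp add: emeasure_ball)
    also have "\<dots> \<le> emeasure lborel U" using d(2) Uborel by (intro emeasure_mono) auto
    finally show ?thesis .
  qed
  have mu_fin: "emeasure lborel U < \<infinity>" using Ubnd by (rule emeasure_bounded_finite)
  obtain m where m: "emeasure lborel U = ennreal m" "m > 0"
    using mu_pos mu_fin by (metis ennreal_cases ennreal_less_zero_iff infinity_ennreal_def less_irrefl)
  have aff: "emeasure lborel ((\<lambda>x. c *\<^sub>R x + v) ` U) = ennreal (c^2) * emeasure lborel U"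
    if c: "c > 0" and Ab: "(\<lambda>x. c *\<^sub>R x + v) ` U \<in> sets borel" for c v
  proof -
    have "emeasure lebesgue ((\<lambda>x. c *\<^sub>R x + v) ` U) = \<bar>c\<bar> ^ DIM(complex) * emeasure lebesgue U"
      by (rule emeasure_lebesgue_affine)
    then show ?thesis using Ab Uborel c by (simp add: ennreal_power)
  qed
  have ball_eq: "{z. H (z - v) < c} = (\<lambda>x. c *\<^sub>R x + v) ` U" if c: "c > 0" for c v
  proof (rule Set.set_eqI, rule iffI)
    fix z assume "z \<in> {z. H (z - v) < c}"
    then have "H (z - v) < c" by simp
    have "H ((1/c) *\<^sub>R (z - v)) = \<bar>1/c\<bar> * H (z - v)" by (rule Hhom)
    also have "\<dots> = (1/c) * H (z - v)" using c by simp
    also have "\<dots> < (1/c) * c" using \<open>H (z - v) < c\<close> c by (intro mult_strict_left_mono) auto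
    also have "(1/c) * c = 1" using c by simp
    finally have "(1/c) *\<^sub>R (z - v) \<in> U" unfolding U_def by simp
    moreover have "z = c *\<^sub>R ((1/c) *\<^sub>R (z - v)) + v" using c by simp
    ultimately show "z \<in> (\<lambda>x. c *\<^sub>R x + v) ` U" by blast
  next
    fix z assume "z \<in> (\<lambda>x. c *\<^sub>R x + v) ` U"
    then obtain x where x: "x \<in> U" "z = c *\<^sub>R x + v" by blast
    then have "H (z - v) = c * H x" using Hhom c by simp
    then show "z \<in> {z. H (z - v) < c}" using x c unfolding U_def by simp
  qed
  have open_ball: "open {z. H (z - v) < c}" for v c
    by (rule open_Collect_less) (intro continuous_on_compose2[OF Hcont] continuous_intros, auto)
  define A where "A q = {z. H (z - q) < T/2}" for q
  define Big where "Big = {z. H (z - 0) < R + T}"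
  have A_sets: "A q \<in> sets lborel" for q unfolding A_def sets_lborel by (rule borel_open[OF open_ball])
  have A_meas: "emeasure lborel (A q) = ennreal ((T/2)^2) * emeasure lborel U" for q
  proof -
    have eq: "A q = (\<lambda>x. (T/2) *\<^sub>R x + q) ` U" unfolding A_def by (rule ball_eq) (use T in simp)
    have "A q \<in> sets borel" using A_sets by simp
    then show ?thesis unfolding eq by (intro aff) (use T in auto)
  qed
  have Big_sets: "Big \<in> sets borel" unfolding Big_def by (rule borel_open[OF open_ball])
  have Big_meas: "emeasure lborel Big = ennreal ((R+T)^2) * emeasure lborel U"
  proof -
    have eq: "Big = (\<lambda>x. (R+T) *\<^sub>R x + 0) ` U" unfolding Big_def by (rule ball_eq) (use T R0 in simp)
    have "Big \<in> sets borel" unfolding Big_def by (rule borel_open[OF open_ball])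
    then show ?thesis unfolding eq by (intro aff) (use T R0 in auto)
  qed
  have disj: "disjoint_family_on A Q"
    unfolding disjoint_family_on_def
  proof (intro ballI impI)
    fix q q' assume q: "q \<in> Q" "q' \<in> Q" "q \<noteq> q'"
    show "A q \<inter> A q' = {}"
    proof (rule ccontr)
      assume "A q \<inter> A q' \<noteq> {}"
      then obtain z where "H (z - q) < T/2" "H (z - q') < T/2" unfolding A_def by auto
      moreover have "H (q - q') \<le> H (q - z) + H (z - q')" using Htri[of "q - z" "z - q'"] by simp
      moreover have "H (q - z) = H (z - q)" using Hneg[of "z - q"] by simp
      moreover have "G (q - q') \<le> H (q - q')" unfolding H_def using e0 by simp
      ultimately show False using sep[OF q] by linarith
    qed
  qed
  have sub: "(\<Union>q\<in>Q. A q) \<subseteq> Big"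
  proof safe
    fix q z assume q: "q \<in> Q" and z: "z \<in> A q"
    have "H z \<le> H (z - q) + H q" using Htri[of "z - q" q] by simp
    moreover have "H (z - q) < T/2" using z unfolding A_def by simp
    moreover have "e * norm q \<le> e * B" using Bq[OF q] e0 by simp
    moreover have "e * B = T / 2" unfolding e_def using B0 by simp
    moreover have "H q = G q + e * norm q" unfolding H_def ..
    ultimately show "z \<in> Big" unfolding Big_def using bnd[OF q] by simp
  qed
  have "(\<Sum>q\<in>Q. emeasure lborel (A q)) = emeasure lborel (\<Union>q\<in>Q. A q)"
    by (rule sum_emeasure) (use A_sets disj fin in auto)
  also have "\<dots> \<le> emeasure lborel Big" using sub Big_sets by (intro emeasure_mono) auto
  finally have "of_nat (card Q) * (ennreal ((T/2)^2) * ennreal m) \<le> ennreal ((R+T)^2) * ennreal m"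
    unfolding A_meas Big_meas m by simp
  then have "ennreal (real (card Q) * (T/2)^2 * m) \<le> ennreal ((R+T)^2 * m)"
    by (simp add: ennreal_mult' ennreal_of_nat_eq_real_of_nat mult.assoc ennreal_mult'')
  then have "real (card Q) * (T/2)^2 * m \<le> (R+T)^2 * m"
    using m(2) by (subst (asm) ennreal_le_iff) auto
  then have "real (card Q) * (T/2)^2 \<le> (R+T)^2" using m(2) by simp
  then show ?thesis by (simp add: power_divide)
qed

lemma cont_Max_image:
  fixes h :: "'s \<Rightarrow> complex \<Rightarrow> real"
  assumes "finite E" "E \<noteq> {}" "\<And>\<sigma>. \<sigma> \<in> E \<Longrightarrow> continuous_on UNIV (h \<sigma>)"
  shows "continuous_on UNIV (\<lambda>z. Max ((\<lambda>\<sigma>. h \<sigma> z) ` E))"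
  using assms
proof (induction E rule: finite_ne_induct)
  case (singleton x)
  then show ?case by simp
next
  case (insert x F)
  have eq: "(\<lambda>z. Max (insert (h x z) ((\<lambda>\<sigma>. h \<sigma> z) ` F))) = (\<lambda>z. max (h x z) (Max ((\<lambda>\<sigma>. h \<sigma> z) ` F)))"
    using insert.hyps by (simp add: Max_insert)
  have c: "continuous_on UNIV (\<lambda>z. max (h x z) (Max ((\<lambda>\<sigma>. h \<sigma> z) ` F)))"
    using insert by (intro continuous_on_max) auto
  show ?case unfolding image_insert eq by (rule c)
qed

lemma maxlin_props:
  fixes E :: "'s set" and a b :: "'s \<Rightarrow> complex"
  assumes fin: "finite E" and ne: "E \<noteq> {}"
  defines "G \<equiv> \<lambda>z. Max ((\<lambda>\<sigma>. cmod (of_real (Re z) * a \<sigma> + of_real (Im z) * b \<sigma>)) ` E)"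
  shows "continuous_on UNIV G" and "G (z + w) \<le> G z + G w" and "G (r *\<^sub>R z) = \<bar>r\<bar> * G z"
proof -
  show "continuous_on UNIV G" unfolding G_def
    by (rule cont_Max_image[OF fin ne]) (intro continuous_intros)
next
  show "G (z + w) \<le> G z + G w"
    unfolding G_def
  proof (subst Max_le_iff, (use fin ne in auto)[2], safe)
    fix \<sigma> assume s: "\<sigma> \<in> E"
    have "cmod (of_real (Re (z + w)) * a \<sigma> + of_real (Im (z + w)) * b \<sigma>)
        = cmod ((of_real (Re z) * a \<sigma> + of_real (Im z) * b \<sigma>) + (of_real (Re w) * a \<sigma> + of_real (Im w) * b \<sigma>))"
      by (simp add: algebra_simps)
    also have "\<dots> \<le> cmod (of_real (Re z) * a \<sigma> + of_real (Im z) * b \<sigma>) + cmod (of_real (Re w) * a \<sigma> + of_real (Im w) * b \<sigma>)"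
      by (rule norm_triangle_ineq)
    also have "\<dots> \<le> Max ((\<lambda>\<sigma>. cmod (of_real (Re z) * a \<sigma> + of_real (Im z) * b \<sigma>)) ` E) + Max ((\<lambda>\<sigma>. cmod (of_real (Re w) * a \<sigma> + of_real (Im w) * b \<sigma>)) ` E)"
      using fin s by (intro add_mono Max_ge) auto
    finally show "cmod (of_real (Re (z + w)) * a \<sigma> + of_real (Im (z + w)) * b \<sigma>) \<le> \<dots>" .
  qed
next
  have e: "(\<lambda>\<sigma>. cmod (of_real (Re (r *\<^sub>R z)) * a \<sigma> + of_real (Im (r *\<^sub>R z)) * b \<sigma>)) ` E
      = (\<lambda>t. \<bar>r\<bar> * t) ` ((\<lambda>\<sigma>. cmod (of_real (Re z) * a \<sigma> + of_real (Im z) * b \<sigma>)) ` E)"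
  proof -
    have "cmod (of_real (Re (r *\<^sub>R z)) * a \<sigma> + of_real (Im (r *\<^sub>R z)) * b \<sigma>) = \<bar>r\<bar> * cmod (of_real (Re z) * a \<sigma> + of_real (Im z) * b \<sigma>)" for \<sigma>
    proof -
      have "of_real (Re (r *\<^sub>R z)) * a \<sigma> + of_real (Im (r *\<^sub>R z)) * b \<sigma> = of_real r * (of_real (Re z) * a \<sigma> + of_real (Im z) * b \<sigma>)"
        by (simp add: algebra_simps)
      then show ?thesis by (simp add: norm_mult)
    qed
    then show ?thesis by (simp add: image_image)
  qed
  have m: "mono (\<lambda>t::real. \<bar>r\<bar> * t)" by (rule monoI) (simp add: mult_left_mono)
  show "G (r *\<^sub>R z) = \<bar>r\<bar> * G z" unfolding G_def e
    by (rule mono_Max_commute[OF m, symmetric]) (use fin ne in auto)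
qed

lemma of_real_of_rat_c: "complex_of_real (of_rat r) = of_rat r"
  by (cases r) (simp add: of_rat_rat)

lemma coord_alg:
  fixes u v s1 s2 t ik :: complex
  shows "- (u * s1 + v * s2) * ik + u * t + v * t^2 = u * (t - s1 * ik) + v * (t^2 - s2 * ik)"
  by (simp add: algebra_simps)

definition lin3 :: "complex \<Rightarrow> rat \<Rightarrow> rat \<Rightarrow> rat \<Rightarrow> complex" where
  "lin3 t a b c = of_rat a + of_rat b * t + of_rat c * t^2"

lemma cubic_poly_expand:
  fixes f :: "rat poly"
  assumes "degree f = 3"
  shows "f = [:coeff f 0, coeff f 1, coeff f 2, coeff f 3:]"
proof (rule poly_eqI)
  fix n
  show "coeff f n = coeff [:coeff f 0, coeff f 1, coeff f 2, coeff f 3:] n"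
  proof (cases "n \<le> 3")
    case True
    then have "n = 0 \<or> n = 1 \<or> n = 2 \<or> n = 3" by auto
    then show ?thesis by (auto simp: numeral_3_eq_3 numeral_2_eq_2)
  next
    case False
    then have "coeff f n = 0" using assms by (intro coeff_eq_0) simp
    moreover have m: "n = Suc (Suc (Suc (Suc (n - 4))))" using False by arith
    ultimately show ?thesis by (metis coeff_pCons_Suc coeff_0)
  qed
qed

context
  fixes K :: "complex set" and f :: "rat poly" and \<theta> :: complex
  assumes deg: "degree f = 3" and root: "poly (map_poly of_rat f) \<theta> = 0"
    and Kdef: "K = {poly (map_poly of_rat q) \<theta> | q. True}"
begin

definition "dd i = - coeff f i / coeff f 3"

lemma theta3: "\<theta>^3 = lin3 \<theta> (dd 0) (dd 1) (dd 2)"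
proof -
  have "f \<noteq> 0" using deg by auto
  then have "lead_coeff f \<noteq> 0" by simp
  then have c3: "coeff f 3 \<noteq> 0" using deg by simp
  have "0 = poly (map_poly of_rat [:coeff f 0, coeff f 1, coeff f 2, coeff f 3:]) \<theta>"
    using root cubic_poly_expand[OF deg] by simp
  also have "\<dots> = of_rat (coeff f 0) + \<theta> * (of_rat (coeff f 1) + \<theta> * (of_rat (coeff f 2) + \<theta> * of_rat (coeff f 3)))"
    by (simp add: Polynomial.map_poly_pCons)
  finally have e: "of_rat (coeff f 3) * \<theta>^3 = - (of_rat (coeff f 0) + of_rat (coeff f 1) * \<theta> + of_rat (coeff f 2) * \<theta>^2)"
    by (simp add: algebra_simps power2_eq_square power3_eq_cube eq_neg_iff_add_eq_0)
  have c3': "(of_rat (coeff f 3) :: complex) \<noteq> 0" using c3 by simp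
  have "\<theta>^3 = (of_rat (coeff f 3) * \<theta>^3) / of_rat (coeff f 3)" using c3' by simp
  also have "\<dots> = - (of_rat (coeff f 0) + of_rat (coeff f 1) * \<theta> + of_rat (coeff f 2) * \<theta>^2) / of_rat (coeff f 3)"
    by (simp only: e)
  also have "\<dots> = lin3 \<theta> (dd 0) (dd 1) (dd 2)"
    unfolding lin3_def dd_def using c3' by (simp add: of_rat_divide of_rat_minus field_simps)
  finally show ?thesis .
qed

lemma mul_theta: "\<theta> * lin3 \<theta> a b c = lin3 \<theta> (c * dd 0) (a + c * dd 1) (b + c * dd 2)"
proof -
  have "\<theta> * lin3 \<theta> a b c = of_rat a * \<theta> + of_rat b * \<theta>^2 + of_rat c * \<theta>^3"
    unfolding lin3_def by (simp add: algebra_simps power2_eq_square power3_eq_cube)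
  also have "\<dots> = lin3 \<theta> (c * dd 0) (a + c * dd 1) (b + c * dd 2)"
    unfolding theta3 lin3_def by (simp add: of_rat_add of_rat_mult algebra_simps)
  finally show ?thesis .
qed

lemma lin3_add: "lin3 t a b c + lin3 t a' b' c' = lin3 t (a + a') (b + b') (c + c')"
  unfolding lin3_def by (simp add: of_rat_add algebra_simps)

lemma lin3_diff: "lin3 t a b c - lin3 t a' b' c' = lin3 t (a - a') (b - b') (c - c')"
  unfolding lin3_def by (simp add: of_rat_diff algebra_simps)

lemma lin3_smult: "of_rat r * lin3 t a b c = lin3 t (r * a) (r * b) (r * c)"
  unfolding lin3_def by (simp add: of_rat_mult algebra_simps)

definition "K3 = {x. \<exists>a b c. x = lin3 \<theta> a b c}"

lemma K3_add: assumes "x \<in> K3" "y \<in> K3" shows "x + y \<in> K3"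
proof -
  obtain a b c where x: "x = lin3 \<theta> a b c" using assms(1) unfolding K3_def by blast
  obtain a' b' c' where y: "y = lin3 \<theta> a' b' c'" using assms(2) unfolding K3_def by blast
  have "x + y = lin3 \<theta> (a + a') (b + b') (c + c')" unfolding x y lin3_add ..
  then show ?thesis unfolding K3_def by blast
qed

lemma K3_smult: assumes "x \<in> K3" shows "of_rat r * x \<in> K3"
proof -
  obtain a b c where x: "x = lin3 \<theta> a b c" using assms(1) unfolding K3_def by blast
  have "of_rat r * x = lin3 \<theta> (r * a) (r * b) (r * c)" unfolding x lin3_smult ..
  then show ?thesis unfolding K3_def by blast
qed

lemma K3_theta: assumes "x \<in> K3" shows "\<theta> * x \<in> K3"
proof -
  obtain a b c where x: "x = lin3 \<theta> a b c" using assms(1) unfolding K3_def by blast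
  have "\<theta> * x = lin3 \<theta> (c * dd 0) (a + c * dd 1) (b + c * dd 2)" unfolding x mul_theta ..
  then show ?thesis unfolding K3_def by blast
qed

lemma K3_rat: "of_rat r \<in> K3"
  unfolding K3_def by (rule CollectI, rule exI[of _ r], rule exI[of _ 0], rule exI[of _ 0]) (simp add: lin3_def)

lemma K3_mult: assumes "x \<in> K3" "y \<in> K3" shows "x * y \<in> K3"
proof -
  obtain a b c where x: "x = lin3 \<theta> a b c" using assms(1) unfolding K3_def by blast
  have "x * y = of_rat a * y + of_rat b * (\<theta> * y) + of_rat c * (\<theta> * (\<theta> * y))"
    unfolding x lin3_def by (simp add: algebra_simps power2_eq_square)
  then show ?thesis using assms(2) by (simp add: K3_add K3_smult K3_theta)
qed

lemma K_eq: "K = K3"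
proof
  show "K \<subseteq> K3"
  proof
    fix x assume "x \<in> K"
    then obtain q where q: "x = poly (map_poly of_rat q) \<theta>" unfolding Kdef by blast
    have "poly (map_poly of_rat q) \<theta> \<in> K3" for q
    proof (induction q)
      case 0
      then show ?case using K3_rat[of 0] by simp
    next
      case (pCons a p)
      have "poly (map_poly of_rat (pCons a p)) \<theta> = of_rat a + \<theta> * poly (map_poly of_rat p) \<theta>"
        by (simp add: Polynomial.map_poly_pCons)
      then show ?case using pCons.IH by (simp add: K3_add K3_rat K3_theta)
    qed
    then show "x \<in> K3" using q by simp
  qed
next
  show "K3 \<subseteq> K"
  proof
    fix x assume "x \<in> K3"
    then obtain a b c where x: "x = lin3 \<theta> a b c" unfolding K3_def by blast
    have "x = poly (map_poly of_rat [:a, b, c:]) \<theta>"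
      unfolding x lin3_def by (simp add: Polynomial.map_poly_pCons algebra_simps power2_eq_square)
    then show "x \<in> K" unfolding Kdef by blast
  qed
qed

lemma K_mem: "x \<in> K \<longleftrightarrow> (\<exists>a b c. x = lin3 \<theta> a b c)"
  unfolding K_eq K3_def by simp

lemma K_add: "x \<in> K \<Longrightarrow> y \<in> K \<Longrightarrow> x + y \<in> K" unfolding K_eq by (rule K3_add)
lemma K_mult: "x \<in> K \<Longrightarrow> y \<in> K \<Longrightarrow> x * y \<in> K" unfolding K_eq by (rule K3_mult)
lemma K_rat: "of_rat r \<in> K" unfolding K_eq by (rule K3_rat)
lemma K_1: "1 \<in> K" using K_rat[of 1] by simp
lemma K_0: "0 \<in> K" using K_rat[of 0] by simp
lemma K_neg: "x \<in> K \<Longrightarrow> - x \<in> K" using K_mult[OF K_rat[of "-1"]] by simp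
lemma K_diff: "x \<in> K \<Longrightarrow> y \<in> K \<Longrightarrow> x - y \<in> K" using K_add K_neg by (metis diff_conv_add_uminus)
lemma K_theta: "\<theta> \<in> K" unfolding K_mem by (rule exI[of _ 0], rule exI[of _ 1], rule exI[of _ 0]) (simp add: lin3_def)
lemma K_int: "of_int n \<in> K" using K_rat[of "of_int n"] by simp

lemma emb_add: "\<sigma> \<in> embeddings K \<Longrightarrow> x \<in> K \<Longrightarrow> y \<in> K \<Longrightarrow> \<sigma> (x + y) = \<sigma> x + \<sigma> y"
  unfolding embeddings_def by auto
lemma emb_mult: "\<sigma> \<in> embeddings K \<Longrightarrow> x \<in> K \<Longrightarrow> y \<in> K \<Longrightarrow> \<sigma> (x * y) = \<sigma> x * \<sigma> y"
  unfolding embeddings_def by auto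
lemma emb_1: "\<sigma> \<in> embeddings K \<Longrightarrow> \<sigma> 1 = 1"
  unfolding embeddings_def by auto
lemma emb_out: "\<sigma> \<in> embeddings K \<Longrightarrow> x \<notin> K \<Longrightarrow> \<sigma> x = 0"
  unfolding embeddings_def by auto

lemma emb_0: assumes "\<sigma> \<in> embeddings K" shows "\<sigma> 0 = 0"
  using emb_add[OF assms K_0 K_0] by simp

lemma emb_neg: assumes "\<sigma> \<in> embeddings K" "x \<in> K" shows "\<sigma> (- x) = - \<sigma> x"
proof -
  have h: "\<sigma> x + \<sigma> (- x) = 0" using emb_add[OF assms K_neg[OF assms(2)]] emb_0[OF assms(1)] by simp
  then show ?thesis by (metis neg_eq_iff_add_eq_0)
qed

lemma emb_diff: assumes "\<sigma> \<in> embeddings K" "x \<in> K" "y \<in> K" shows "\<sigma> (x - y) = \<sigma> x - \<sigma> y"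
  using emb_add[OF assms(1,2) K_neg[OF assms(3)]] emb_neg[OF assms(1,3)] by simp

lemma K_nat: "of_nat n \<in> K" using K_rat[of "of_nat n"] by simp

lemma emb_nat: assumes "\<sigma> \<in> embeddings K" shows "\<sigma> (of_nat n) = of_nat n"
proof (induction n)
  case 0 then show ?case using emb_0[OF assms] by simp
next
  case (Suc n)
  have "\<sigma> (of_nat (Suc n)) = \<sigma> (1 + of_nat n)" by simp
  also have "\<dots> = 1 + of_nat n" using emb_add[OF assms K_1 K_nat] emb_1[OF assms] Suc by simp
  finally show ?case by simp
qed

lemma emb_int: assumes "\<sigma> \<in> embeddings K" shows "\<sigma> (of_int n) = of_int n"
proof (rule int_cases2[of n])
  fix m assume m: "n = int m"
  then show ?thesis using emb_nat[OF assms, of m] by simp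
next
  fix m assume m: "n = - int m"
  have "\<sigma> (of_int n) = \<sigma> (- of_nat m)" using m by simp
  also have "\<dots> = - of_nat m" using emb_neg[OF assms K_nat] emb_nat[OF assms] by simp
  finally show ?thesis using m by simp
qed

lemma emb_rat: assumes "\<sigma> \<in> embeddings K" shows "\<sigma> (of_rat r) = of_rat r"
proof -
  obtain a b where r: "r = Rat.Fract a b" and b: "b > 0" by (cases r) auto
  have ofr: "(of_rat r :: complex) = of_int a / of_int b" using r b by (simp add: of_rat_rat)
  have bne: "(of_int b :: complex) \<noteq> 0" using b by simp
  have "of_rat r * of_int b = (of_int a :: complex)" using ofr bne by simp
  then have "\<sigma> (of_rat r * of_int b) = of_int a" using emb_int[OF assms] by simp
  then have "\<sigma> (of_rat r) * of_int b = of_int a" using emb_mult[OF assms K_rat K_int] emb_int[OF assms] by simp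
  then have "\<sigma> (of_rat r) = of_int a / of_int b" using bne by (simp add: field_simps)
  then show ?thesis using ofr by simp
qed

lemma K_pow: "x \<in> K \<Longrightarrow> x ^ n \<in> K"
  by (induction n) (auto simp: K_1 K_mult)

lemma emb_pow: assumes "\<sigma> \<in> embeddings K" "x \<in> K" shows "\<sigma> (x ^ n) = \<sigma> x ^ n"
proof (induction n)
  case 0 then show ?case using emb_1[OF assms(1)] by simp
next
  case (Suc n)
  then show ?case using emb_mult[OF assms(1) assms(2) K_pow[OF assms(2)]] by simp
qed

lemma emb_lin: assumes "\<sigma> \<in> embeddings K" shows "\<sigma> (lin3 \<theta> a b c) = lin3 (\<sigma> \<theta>) a b c"
proof -
  have k: "of_rat a \<in> K" "of_rat b * \<theta> \<in> K" "of_rat c * \<theta>^2 \<in> K" "\<theta>^2 \<in> K"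
    using K_rat K_mult K_theta K_pow by auto
  have "\<sigma> (lin3 \<theta> a b c) = \<sigma> (of_rat a) + \<sigma> (of_rat b * \<theta>) + \<sigma> (of_rat c * \<theta>^2)"
    unfolding lin3_def using emb_add[OF assms] k K_add by simp
  also have "\<dots> = lin3 (\<sigma> \<theta>) a b c"
    unfolding lin3_def using emb_mult[OF assms] emb_rat[OF assms] emb_pow[OF assms K_theta] k K_rat K_theta
    by simp
  finally show ?thesis .
qed

lemma emb_root: assumes "\<sigma> \<in> embeddings K" shows "\<sigma> \<theta> ^ 3 = lin3 (\<sigma> \<theta>) (dd 0) (dd 1) (dd 2)"
  using emb_pow[OF assms K_theta, of 3] emb_lin[OF assms] theta3 by simp

definition "rep x = (SOME t. x = lin3 \<theta> (fst t) (fst (snd t)) (snd (snd t)))"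

lemma rep: assumes "x \<in> K" shows "x = lin3 \<theta> (fst (rep x)) (fst (snd (rep x))) (snd (snd (rep x)))"
proof -
  obtain a b c where "x = lin3 \<theta> a b c" using assms K_mem by blast
  then have "\<exists>t. x = lin3 \<theta> (fst t) (fst (snd t)) (snd (snd t))" by (intro exI[of _ "(a, b, c)"]) simp
  then show ?thesis unfolding rep_def by (rule someI_ex)
qed

lemma emb_finite: "finite (embeddings K)"
proof -
  define P :: "complex poly" where "P = [:- of_rat (dd 0), - of_rat (dd 1), - of_rat (dd 2), 1:]"
  have P0: "P \<noteq> 0" unfolding P_def by simp
  define R where "R = {z. poly P z = 0}"
  have finR: "finite R" unfolding R_def using poly_roots_finite[OF P0] .
  define \<Phi> where "\<Phi> z = (\<lambda>x. if x \<in> K then lin3 z (fst (rep x)) (fst (snd (rep x))) (snd (snd (rep x))) else 0)" for z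
  have "embeddings K \<subseteq> \<Phi> ` R"
  proof
    fix \<sigma> assume s: "\<sigma> \<in> embeddings K"
    have "\<sigma> = \<Phi> (\<sigma> \<theta>)"
    proof
      fix x show "\<sigma> x = \<Phi> (\<sigma> \<theta>) x"
      proof (cases "x \<in> K")
        case True
        have "\<sigma> x = \<sigma> (lin3 \<theta> (fst (rep x)) (fst (snd (rep x))) (snd (snd (rep x))))"
          by (rule arg_cong[where f = \<sigma>], rule rep[OF True])
        then show ?thesis using True emb_lin[OF s] unfolding \<Phi>_def by simp
      next
        case False then show ?thesis using emb_out[OF s] unfolding \<Phi>_def by simp
      qed
    qed
    moreover have "\<sigma> \<theta> \<in> R"
      using emb_root[OF s] unfolding R_def P_def lin3_def
      by (simp add: algebra_simps power2_eq_square power3_eq_cube)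
    ultimately show "\<sigma> \<in> \<Phi> ` R" by blast
  qed
  then show ?thesis by (rule finite_surj[OF finR])
qed

lemma emb_id: "(\<lambda>x. if x \<in> K then x else 0) \<in> embeddings K"
  unfolding embeddings_def using K_1 K_add K_mult by auto

lemma emb_ne: "embeddings K \<noteq> {}" using emb_id by blast

definition "s1 = (\<Sum>\<sigma>\<in>embeddings K. \<sigma> \<theta>)"
definition "s2 = (\<Sum>\<sigma>\<in>embeddings K. \<sigma> \<theta> ^ 2)"
definition "kk = card (embeddings K)"

lemma kk_pos: "kk > 0" unfolding kk_def using emb_finite emb_ne by (simp add: card_gt_0_iff)

lemma trace_lin: "trace K (lin3 \<theta> a b c) = of_nat kk * of_rat a + of_rat b * s1 + of_rat c * s2"
proof -
  have "trace K (lin3 \<theta> a b c) = (\<Sum>\<sigma>\<in>embeddings K. of_rat a + of_rat b * \<sigma> \<theta> + of_rat c * \<sigma> \<theta> ^ 2)"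
    unfolding trace_def using emb_lin by (simp add: lin3_def)
  also have "\<dots> = of_nat kk * of_rat a + of_rat b * s1 + of_rat c * s2"
    unfolding s1_def s2_def kk_def by (simp add: sum.distrib sum_distrib_left)
  finally show ?thesis .
qed

lemma trace_diff: assumes "x \<in> K" "y \<in> K" shows "trace K (x - y) = trace K x - trace K y"
proof -
  have "(\<Sum>\<sigma>\<in>embeddings K. \<sigma> (x - y)) = (\<Sum>\<sigma>\<in>embeddings K. \<sigma> x - \<sigma> y)"
    by (rule sum.cong) (use emb_diff assms in auto)
  then show ?thesis unfolding trace_def by (simp add: sum_subtractf)
qed

lemma trace_int: "trace K (of_int n) = of_nat kk * of_int n"
proof -
  have "(\<Sum>\<sigma>\<in>embeddings K. \<sigma> (of_int n)) = (\<Sum>\<sigma>\<in>embeddings K. of_int n)"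
    by (rule sum.cong) (use emb_int in auto)
  then show ?thesis unfolding trace_def kk_def by simp
qed

definition "cr x = Complex (of_rat (fst (snd (rep x)))) (of_rat (snd (snd (rep x))))"
definition "w1 \<sigma> = \<sigma> \<theta> - s1 * inverse (of_nat kk)"
definition "w2 \<sigma> = \<sigma> \<theta> ^ 2 - s2 * inverse (of_nat kk)"
definition "Gm z = Max ((\<lambda>\<sigma>. cmod (of_real (Re z) * w1 \<sigma> + of_real (Im z) * w2 \<sigma>)) ` embeddings K)"

lemma emb_coord:
  assumes s: "\<sigma> \<in> embeddings K" and xK: "x \<in> K" and yK: "y \<in> K" and tr: "trace K x = trace K y"
  shows "\<sigma> (x - y) = of_real (Re (cr x - cr y)) * w1 \<sigma> + of_real (Im (cr x - cr y)) * w2 \<sigma>"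
proof -
  define a where "a = fst (rep x)"
  define b where "b = fst (snd (rep x))"
  define c where "c = snd (snd (rep x))"
  define a' where "a' = fst (rep y)"
  define b' where "b' = fst (snd (rep y))"
  define c' where "c' = snd (snd (rep y))"
  have x: "x = lin3 \<theta> a b c" using rep[OF xK] unfolding a_def b_def c_def .
  have y: "y = lin3 \<theta> a' b' c'" using rep[OF yK] unfolding a'_def b'_def c'_def .
  have xy: "x - y = lin3 \<theta> (a - a') (b - b') (c - c')" using x y lin3_diff by simp
  have "trace K (x - y) = 0" using trace_diff[OF xK yK] tr by simp
  then have t0: "of_nat kk * of_rat (a - a') + of_rat (b - b') * s1 + of_rat (c - c') * s2 = 0"
    using trace_lin xy by simp
  have kk0: "(of_nat kk :: complex) \<noteq> 0" using kk_pos by simp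
  have "of_nat kk * of_rat (a - a') = - (of_rat (b - b') * s1 + of_rat (c - c') * s2)"
    using t0 by (simp only: eq_neg_iff_add_eq_0 add.assoc)
  then have ea: "of_rat (a - a') = - (of_rat (b - b') * s1 + of_rat (c - c') * s2) * inverse (of_nat kk)"
    using kk0 by (metis mult.commute nonzero_mult_div_cancel_left divide_inverse)
  have "\<sigma> (x - y) = lin3 (\<sigma> \<theta>) (a - a') (b - b') (c - c')" unfolding xy by (rule emb_lin[OF s])
  also have "\<dots> = of_rat (b - b') * w1 \<sigma> + of_rat (c - c') * w2 \<sigma>"
    unfolding lin3_def w1_def w2_def ea by (rule coord_alg)
  also have "of_rat (b - b') = (of_real (Re (cr x - cr y)) :: complex)"
    unfolding cr_def b_def[symmetric] b'_def[symmetric] by (simp add: of_real_of_rat_c of_rat_diff)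
  also have "of_rat (c - c') = (of_real (Im (cr x - cr y)) :: complex)"
    unfolding cr_def c_def[symmetric] c'_def[symmetric] by (simp add: of_real_of_rat_c of_rat_diff)
  finally show ?thesis .
qed

lemma N_diff:
  assumes xK: "x \<in> K" and yK: "y \<in> K" and tr: "trace K x = trace K y"
  shows "abs_inf K (x - y) = Gm (cr x - cr y)"
  unfolding abs_inf_def Gm_def
  by (rule arg_cong[where f = Max], rule image_cong) (use emb_coord[OF _ xK yK tr] in auto)

lemma N_zero: "abs_inf K 0 = 0"
proof -
  have "(\<lambda>\<sigma>. cmod (\<sigma> 0)) ` embeddings K = (\<lambda>\<sigma>. 0) ` embeddings K"
    by (rule image_cong) (use emb_0 in auto)
  also have "\<dots> = {0}" using emb_ne by auto
  finally have "(\<lambda>\<sigma>. cmod (\<sigma> 0)) ` embeddings K = {0}" .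
  then show ?thesis unfolding abs_inf_def by simp
qed

lemma N_sym: assumes "x \<in> K" "y \<in> K" shows "abs_inf K (x - y) = abs_inf K (y - x)"
  unfolding abs_inf_def
proof (rule arg_cong[where f = Max], rule image_cong)
  fix \<sigma> assume s: "\<sigma> \<in> embeddings K"
  show "cmod (\<sigma> (x - y)) = cmod (\<sigma> (y - x))"
    unfolding emb_diff[OF s assms] emb_diff[OF s assms(2) assms(1)] by (rule norm_minus_commute)
qed simp

lemma N_tri: assumes "x \<in> K" "y \<in> K" shows "abs_inf K (x - y) \<le> abs_inf K x + abs_inf K y"
  unfolding abs_inf_def
proof (subst Max_le_iff, (use emb_finite emb_ne in auto)[2], safe)
  fix \<sigma> assume s: "\<sigma> \<in> embeddings K"
  have "cmod (\<sigma> (x - y)) = cmod (\<sigma> x - \<sigma> y)" using emb_diff[OF s assms] by simp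
  also have "\<dots> \<le> cmod (\<sigma> x) + cmod (\<sigma> y)" by (rule norm_triangle_ineq4)
  also have "\<dots> \<le> Max ((\<lambda>\<sigma>. cmod (\<sigma> x)) ` embeddings K) + Max ((\<lambda>\<sigma>. cmod (\<sigma> y)) ` embeddings K)"
    using emb_finite s by (intro add_mono Max_ge) auto
  finally show "cmod (\<sigma> (x - y)) \<le> \<dots>" .
qed

lemma Gm_eq: "Gm = (\<lambda>z. Max ((\<lambda>\<sigma>. cmod (of_real (Re z) * w1 \<sigma> + of_real (Im z) * w2 \<sigma>)) ` embeddings K))"
  by (rule ext) (simp add: Gm_def)

lemma Gm_props: "continuous_on UNIV Gm" "Gm (z + w) \<le> Gm z + Gm w" "Gm (r *\<^sub>R z) = \<bar>r\<bar> * Gm z"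
  unfolding Gm_eq using maxlin_props[OF emb_finite emb_ne, where a = w1 and b = w2] by auto

lemma Gm_0: "Gm 0 = 0" using Gm_props(3)[of 0 0] by simp

lemma SK_K: "x \<in> S K Y \<Longrightarrow> x \<in> K"
  unfolding S_def ring_of_integers_def by auto

lemma class_bound:
  assumes T: "T > 0" and TY: "T \<le> Y" and finY: "finite (S K Y)" and finT: "finite (S K T)"
  shows "real (card {x \<in> S K Y. trace K x = t}) \<le> 36 * (Y / T)^2 * (real (card (S K T)) + 1)"
proof -
  define P where "P = {x \<in> S K Y. trace K x = t}"
  have finP: "finite P" using finY unfolding P_def by simp
  have PK: "x \<in> K" if "x \<in> P" for x using that SK_K unfolding P_def by auto
  have Ptr: "trace K x = t" if "x \<in> P" for x using that unfolding P_def by auto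
  have PY: "abs_inf K x < Y" if "x \<in> P" for x using that unfolding P_def S_def by auto
  show ?thesis
  proof (cases "P = {}")
    case True then show ?thesis unfolding P_def[symmetric] by simp
  next
    case False
    then obtain p where p: "p \<in> P" by blast
    define sep where "sep A \<longleftrightarrow> (\<forall>q\<in>A. \<forall>q'\<in>A. q \<noteq> q' \<longrightarrow> T \<le> abs_inf K (q - q'))" for A
    have "\<exists>Q. (Q \<subseteq> P \<and> sep Q) \<and> (\<forall>A. A \<subseteq> P \<and> sep A \<longrightarrow> card A \<le> card Q)"
    proof (rule ex_has_greatest_nat[of "\<lambda>A. A \<subseteq> P \<and> sep A" "{}" card "card P + 1"])
      show "{} \<subseteq> P \<and> sep {}" unfolding sep_def by simp
      show "\<forall>A. A \<subseteq> P \<and> sep A \<longrightarrow> card A < card P + 1"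
        using card_mono[OF finP] by (simp add: le_imp_less_Suc)
    qed
    then obtain Q where QP: "Q \<subseteq> P" and sepQ: "sep Q" and Qmax: "\<And>A. A \<subseteq> P \<Longrightarrow> sep A \<Longrightarrow> card A \<le> card Q"
      by blast
    have finQ: "finite Q" using finP QP finite_subset by blast
    have cover: "\<exists>q\<in>Q. abs_inf K (x - q) < T" if x: "x \<in> P" for x
    proof (rule ccontr)
      assume "\<not> (\<exists>q\<in>Q. abs_inf K (x - q) < T)"
      then have far: "\<forall>q\<in>Q. T \<le> abs_inf K (x - q)" by auto
      have xQ: "x \<notin> Q"
      proof
        assume "x \<in> Q"
        then have "T \<le> abs_inf K (x - x)" using far by blast
        then show False using N_zero T by simp
      qed
      have "sep (insert x Q)" unfolding sep_def
      proof (intro ballI impI)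
        fix q q' assume q: "q \<in> insert x Q" "q' \<in> insert x Q" "q \<noteq> q'"
        consider "q = x" "q' \<in> Q" | "q' = x" "q \<in> Q" | "q \<in> Q" "q' \<in> Q" using q by auto
        then show "T \<le> abs_inf K (q - q')"
        proof cases
          case 1 then show ?thesis using far by auto
        next
          case 2
          have "abs_inf K (q - x) = abs_inf K (x - q)"
            using N_sym[OF PK PK] 2 QP x by blast
          then show ?thesis using far 2 by auto
        next
          case 3 then show ?thesis using sepQ q(3) unfolding sep_def by blast
        qed
      qed
      moreover have "insert x Q \<subseteq> P" using QP x by auto
      ultimately have "card (insert x Q) \<le> card Q" using Qmax by blast
      then show False using xQ finQ by simp
    qed
    define B where "B q = {x \<in> P. abs_inf K (x - q) < T}" for q
    have "P \<subseteq> (\<Union>q\<in>Q. B q)" using cover unfolding B_def by blast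
    then have "card P \<le> card (\<Union>q\<in>Q. B q)"
      by (intro card_mono) (auto simp: B_def finQ finP)
    also have "\<dots> \<le> (\<Sum>q\<in>Q. card (B q))" by (rule card_UN_le[OF finQ])
    also have "\<dots> \<le> (\<Sum>q\<in>Q. card (S K T) + 1)"
    proof (rule sum_mono)
      fix q assume qQ: "q \<in> Q"
      have qP: "q \<in> P" using qQ QP by auto
      have "inj_on (\<lambda>x. x - q) (B q)" by (rule inj_onI) simp
      moreover have "(\<lambda>x. x - q) ` B q \<subseteq> insert 0 (S K T)"
      proof
        fix z assume "z \<in> (\<lambda>x. x - q) ` B q"
        then obtain x where x: "x \<in> P" "abs_inf K (x - q) < T" "z = x - q" unfolding B_def by auto
        show "z \<in> insert 0 (S K T)"
        proof (cases "z = 0")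
          case True then show ?thesis by simp
        next
          case False
          have xO: "x \<in> ring_of_integers K" using x(1) unfolding P_def S_def by auto
          have qO: "q \<in> ring_of_integers K" using qP unfolding P_def S_def by auto
          have zO: "z \<in> ring_of_integers K"
            using xO qO x(3) alg_int_diff K_diff unfolding ring_of_integers_def by auto
          have tz: "trace K z = 0" using trace_diff[OF PK[OF x(1)] PK[OF qP]] Ptr[OF x(1)] Ptr[OF qP] x(3) by simp
          have "z \<notin> \<int>"
          proof
            assume "z \<in> \<int>"
            then obtain n where n: "z = of_int n" by (auto elim: Ints_cases)
            then have "of_nat kk * of_int n = (0::complex)" using tz trace_int by simp
            then have "n = 0" using kk_pos by simp
            then show False using False n by simp
          qed
          then show ?thesis using zO tz x(2) x(3) unfolding S_def by auto
        qed
      qed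
      ultimately have "card (B q) \<le> card (insert 0 (S K T))"
        by (intro card_inj_on_le) (auto simp: finT)
      also have "\<dots> \<le> card (S K T) + 1" using finT by (simp add: card_insert_if)
      finally show "card (B q) \<le> card (S K T) + 1" .
    qed
    also have "\<dots> = card Q * (card (S K T) + 1)" by simp
    finally have cP: "card P \<le> card Q * (card (S K T) + 1)" .
    have Gdiff: "abs_inf K (q - q') = Gm (cr q - cr q')" if "q \<in> P" "q' \<in> P" for q q'
      using N_diff[OF PK[OF that(1)] PK[OF that(2)]] Ptr that by simp
    define Q' where "Q' = (\<lambda>q. cr q - cr p) ` Q"
    have inj: "inj_on (\<lambda>q. cr q - cr p) Q"
    proof (rule inj_onI)
      fix q q' assume qq: "q \<in> Q" "q' \<in> Q" "cr q - cr p = cr q' - cr p"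
      then have "cr q - cr q' = 0" by simp
      then have "abs_inf K (q - q') = 0" using Gdiff[of q q'] qq QP Gm_0 by auto
      then show "q = q'" using sepQ qq T unfolding sep_def by force
    qed
    have cQ: "card Q' = card Q" unfolding Q'_def using inj by (rule card_image)
    have "real (card Q') * T^2 \<le> 4 * (2 * Y + T)^2"
    proof (rule packing[OF Gm_props(1) Gm_props(2) Gm_props(3)])
      show "finite Q'" unfolding Q'_def using finQ by simp
      show "T > 0" by (rule T)
      fix z assume "z \<in> Q'"
      then obtain q where q: "q \<in> Q" "z = cr q - cr p" unfolding Q'_def by auto
      have "Gm z = abs_inf K (q - p)" using Gdiff[of q p] q QP p by auto
      also have "\<dots> \<le> abs_inf K q + abs_inf K p" using N_tri PK q QP p by auto
      also have "\<dots> < 2 * Y"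
      proof -
        have "abs_inf K q < Y" using PY q QP by auto
        moreover have "abs_inf K p < Y" using PY p by auto
        ultimately show ?thesis by linarith
      qed
      finally show "Gm z < 2 * Y" .
    next
      fix z z' assume zz: "z \<in> Q'" "z' \<in> Q'" "z \<noteq> z'"
      then obtain q q' where q: "q \<in> Q" "z = cr q - cr p" "q' \<in> Q" "z' = cr q' - cr p" unfolding Q'_def by auto
      then have "q \<noteq> q'" using zz by auto
      then have "T \<le> abs_inf K (q - q')" using sepQ q unfolding sep_def by auto
      also have "\<dots> = Gm (z - z')" using Gdiff[of q q'] q QP by auto
      finally show "T \<le> Gm (z - z')" .
    qed
    also have "\<dots> \<le> 4 * (3 * Y)^2" using T TY by (intro mult_left_mono power_mono) auto
    finally have "real (card Q) * T^2 \<le> 36 * Y^2" unfolding cQ by (simp add: power_mult_distrib)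
    then have cQb: "real (card Q) \<le> 36 * (Y / T)^2" using T by (simp add: power_divide field_simps)
    have "real (card P) \<le> real (card Q) * (real (card (S K T)) + 1)" using cP
      by (metis of_nat_1 of_nat_add of_nat_le_iff of_nat_mult)
    also have "\<dots> \<le> 36 * (Y / T)^2 * (real (card (S K T)) + 1)"
      using cQb by (intro mult_right_mono) auto
    finally show ?thesis unfolding P_def .
  qed
qed

lemma total_bound:
  assumes T: "T > 0" and TY: "T \<le> Y" and finY: "finite (S K Y)" and finT: "finite (S K T)"
  shows "real (card (S K Y)) \<le> 108 * (Y / T)^2 * (real (card (S K T)) + 1)"
proof -
  define F where "F t = {x \<in> S K Y. trace K x = t}" for t
  have "S K Y = (\<Union>t\<in>{-1, 0, 1}. F t)" unfolding F_def S_def by auto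
  then have "card (S K Y) \<le> (\<Sum>t\<in>{-1, 0, 1}. card (F t))" using card_UN_le[of "{-1, 0, 1::complex}" F] by simp
  then have "real (card (S K Y)) \<le> (\<Sum>t\<in>{-1, 0, 1::complex}. real (card (F t)))"
    by (metis of_nat_le_iff of_nat_sum)
  also have "\<dots> \<le> (\<Sum>t\<in>{-1, 0, 1::complex}. 36 * (Y / T)^2 * (real (card (S K T)) + 1))"
    by (rule sum_mono) (unfold F_def, rule class_bound[OF T TY finY finT])
  also have "\<dots> = 108 * (Y / T)^2 * (real (card (S K T)) + 1)" by simp
  finally show ?thesis .
qed

end

theorem lemma3p7:
  fixes C :: real
  assumes "C > 1"
    and "\<forall>Z::real. \<forall>K. Z > 0 \<and> cubic_field K \<and> cmod (disc K) \<le> Z \<longrightarrow> S K (C * Z powr (1/4)) \<noteq> {}"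
  shows "\<exists>M::real. \<forall>X Y::real. \<forall>K. X > 0 \<and> Y > 0 \<and> Y \<ge> C * X powr (1/4) \<and> cubic_field K \<and>
           X / 2 \<le> cmod (disc K) \<and> cmod (disc K) \<le> X \<longrightarrow>
           real (card (S K Y)) / real (card (S K (C * X powr (1/4)))) \<le> M * (Y^2 / X powr (1/2))"
proof (intro exI[of _ 216] allI impI)
  fix X Y :: real and K
  assume H: "X > 0 \<and> Y > 0 \<and> Y \<ge> C * X powr (1/4) \<and> cubic_field K \<and>
           X / 2 \<le> cmod (disc K) \<and> cmod (disc K) \<le> X"
  define T where "T = C * X powr (1/4)"
  have X: "X > 0" and Y: "Y > 0" and TY: "T \<le> Y" and cf: "cubic_field K" and dX: "cmod (disc K) \<le> X"
    using H unfolding T_def by auto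
  have T: "T > 0" unfolding T_def using assms(1) X by simp
  have ne: "S K T \<noteq> {}" unfolding T_def using assms(2) X cf dX by blast
  have rhs: "0 \<le> 216 * (Y^2 / X powr (1/2))" by simp
  obtain f \<theta> where deg: "degree f = 3" and root: "poly (map_poly of_rat f) \<theta> = 0"
    and Kdef: "K = {poly (map_poly of_rat q) \<theta> | q. True}"
    using cf unfolding cubic_field_def by blast
  have "real (card (S K Y)) / real (card (S K T)) \<le> 216 * (Y^2 / X powr (1/2))"
  proof (cases "finite (S K Y) \<and> finite (S K T)")
    case False
    then have "card (S K Y) = 0 \<or> card (S K T) = 0" by auto
    then show ?thesis using rhs by auto
  next
    case True
    then have finY: "finite (S K Y)" and finT: "finite (S K T)" by auto
    have s1: "real (card (S K T)) \<ge> 1" using ne finT by (simp add: Suc_le_eq card_gt_0_iff)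
    have YT: "(Y / T)^2 \<ge> 0" by simp
    have "real (card (S K Y)) \<le> 108 * (Y / T)^2 * (real (card (S K T)) + 1)"
      by (rule total_bound[OF deg root Kdef T TY finY finT])
    also have "\<dots> \<le> 108 * (Y / T)^2 * (2 * real (card (S K T)))"
      using s1 YT by (intro mult_left_mono) auto
    finally have "real (card (S K Y)) \<le> (216 * (Y / T)^2) * real (card (S K T))" by simp
    then have r1: "real (card (S K Y)) / real (card (S K T)) \<le> 216 * (Y / T)^2"
      using s1 by (simp add: pos_divide_le_eq)
    have XP: "X powr (1/2) > 0" using X by simp
    have T2: "T^2 = C^2 * X powr (1/2)"
    proof -
      have "(X powr (1/4))^2 = X powr (1/4) * X powr (1/4)" by (simp add: power2_eq_square)
      also have "\<dots> = X powr (1/2)" by (simp add: powr_add[symmetric])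
      finally show ?thesis unfolding T_def by (simp add: power_mult_distrib)
    qed
    have "(Y / T)^2 = Y^2 / (C^2 * X powr (1/2))" by (simp add: power_divide T2)
    also have "\<dots> \<le> Y^2 / X powr (1/2)"
    proof (rule divide_left_mono)
      have "C^2 \<ge> 1" using assms(1) by (simp add: one_le_power)
      then show "X powr (1/2) \<le> C^2 * X powr (1/2)" using XP by (simp add: mult_le_cancel_right1)
      show "0 \<le> Y^2" by simp
      show "0 < C^2 * X powr (1/2) * X powr (1/2)" using XP assms(1) by simp
    qed
    finally have "(Y / T)^2 \<le> Y^2 / X powr (1/2)" .
    then show ?thesis using r1 by linarith
  qed
  then show "real (card (S K Y)) / real (card (S K (C * X powr (1/4)))) \<le> 216 * (Y^2 / X powr (1/2))"
    unfolding T_def .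
qed

end
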